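(* Let $\delta_1>0$ be an admissible one-dimensional sum-product exponent, i.e. a constant such that every finite, non-empty set $B\subseteq\mathbb{R}$ satisfies $|B+B|+|B\cdot B|\gtrsim |B|^{1+\delta_1}$. Let $d\in\mathbb{N}$. Then for every finite, non-empty set $A$ of $d\times d$ diagonal matrices with real entries, \[ |A+A|+|A\cdot A| \gtrsim_d |A|^{1+\delta_1/d}, \] where $A+A$ and $A\cdot A$ are formed with ordinary matrix addition and multiplication.
   Context: For finite sets $A,B$ of matrices, $A+B=\{a+b: a\in A, b\in B\}$ and $A\cdot B=\{ab: a\in A,b\in B\}$. Notation: $X\gtrsim Y$ means $|X|\ge C|Y|(\log|A|)^{D}$ for some constants $C>0$ and $D$ (with $A$ the set under consideration); $X\gtrsim_z Y$ means the same with $C$ and $D$ allowed to depend on the parameter $z$. The paper takes $\delta_1$ to be the best known such exponent; by a result of Shakan, $\delta_1=1/3+5/5277$ is admissible. *)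

theory Defs
  imports "HOL-Analysis.Analysis"
begin

definition real_sumset :: "real set \<Rightarrow> real set" where
  "real_sumset B = {a + b | a b. a \<in> B \<and> b \<in> B}"

definition real_prodset :: "real set \<Rightarrow> real set" where
  "real_prodset B = {a * b | a b. a \<in> B \<and> b \<in> B}"

definition mat_sumset :: "(real^'n^'n) set \<Rightarrow> (real^'n^'n) set" where
  "mat_sumset A = {a + b | a b. a \<in> A \<and> b \<in> A}"

definition mat_prodset :: "(real^'n^'n) set \<Rightarrow> (real^'n^'n) set" where
  "mat_prodset A = {a ** b | a b. a \<in> A \<and> b \<in> A}"

definition diagonal_mat :: "real^'n^'n \<Rightarrow> bool" where
  "diagonal_mat M \<longleftrightarrow> (\<forall>i j. i \<noteq> j \<longrightarrow> M $ i $ j = 0)"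

text \<open>X \<gtrsim> Y: |X| \<ge> C |Y| (log |B|)^D for constants C > 0 and D.
  Admissible one-dimensional sum-product exponent.\<close>
definition sp_admissible :: "real \<Rightarrow> bool" where
  "sp_admissible \<delta> \<longleftrightarrow>
     (\<exists>C>0. \<exists>D::real. \<forall>B::real set. finite B \<and> B \<noteq> {} \<longrightarrow>
        real (card (real_sumset B)) + real (card (real_prodset B))
          \<ge> C * real (card B) powr (1 + \<delta>) * ln (real (card B)) powr D)"

end

theory Submission
  imports Defs
begin


definition fsum :: "('a \<Rightarrow> real) set \<Rightarrow> ('a \<Rightarrow> real) set" where
  "fsum A = (\<lambda>(a,b). (\<lambda>j. a j + b j)) ` (A \<times> A)"
definition fprod :: "('a \<Rightarrow> real) set \<Rightarrow> ('a \<Rightarrow> real) set" where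
  "fprod A = (\<lambda>(a,b). (\<lambda>j. a j * b j)) ` (A \<times> A)"
definition SS :: "('a \<Rightarrow> real) set \<Rightarrow> real" where
  "SS A = real (card (fsum A)) + real (card (fprod A))"
definition Lg :: "nat \<Rightarrow> real" where "Lg N = 1 + ln (real N)"

lemma fsum_finite: "finite A \<Longrightarrow> finite (fsum A)" unfolding fsum_def by simp
lemma fprod_finite: "finite A \<Longrightarrow> finite (fprod A)" unfolding fprod_def by simp
lemma fsum_mono: "A \<subseteq> B \<Longrightarrow> fsum A \<subseteq> fsum B" unfolding fsum_def by auto
lemma fprod_mono: "A \<subseteq> B \<Longrightarrow> fprod A \<subseteq> fprod B" unfolding fprod_def by auto
lemma fsum_mem: "a \<in> A \<Longrightarrow> b \<in> A \<Longrightarrow> (\<lambda>j. a j + b j) \<in> fsum A" unfolding fsum_def by force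
lemma fprod_mem: "a \<in> A \<Longrightarrow> b \<in> A \<Longrightarrow> (\<lambda>j. a j * b j) \<in> fprod A" unfolding fprod_def by force

lemma SS_mono: "A \<subseteq> B \<Longrightarrow> finite B \<Longrightarrow> SS A \<le> SS B"
proof -
  assume a: "A \<subseteq> B" "finite B"
  have "card (fsum A) \<le> card (fsum B)" by (rule card_mono[OF fsum_finite[OF a(2)] fsum_mono[OF a(1)]])
  moreover have "card (fprod A) \<le> card (fprod B)" by (rule card_mono[OF fprod_finite[OF a(2)] fprod_mono[OF a(1)]])
  ultimately show ?thesis unfolding SS_def by simp
qed

lemma Lg_ge1: "N \<ge> 1 \<Longrightarrow> Lg N \<ge> 1" unfolding Lg_def by simp
lemma Lg_mono: "1 \<le> M \<Longrightarrow> M \<le> N \<Longrightarrow> Lg M \<le> Lg N" unfolding Lg_def by simp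

lemma harm_le_Lg: "N \<ge> 1 \<Longrightarrow> (harm N :: real) \<le> Lg N"
  using euler_mascheroni_sequence_decreasing[of 1 N] unfolding Lg_def by (simp add: harm_expand)

lemma fiber_sum:
  assumes "finite X" "finite T"
  shows "(\<Sum>s\<in>T. card {z\<in>X. p z = s}) \<le> card X"
proof -
  have "(\<Sum>s\<in>T. card {z\<in>X. p z = s}) = card (\<Union>s\<in>T. {z\<in>X. p z = s})"
    by (rule card_UN_disjoint[symmetric]) (use assms in auto)
  also have "\<dots> \<le> card X" by (rule card_mono) (use assms in auto)
  finally show ?thesis .
qed

lemma fiber_sum_inj:
  assumes "finite X" "finite T" "inj_on f T" "\<And>x. x \<in> T \<Longrightarrow> Y x \<subseteq> {z\<in>X. p z = f x}"
  shows "(\<Sum>x\<in>T. card (Y x)) \<le> card X"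
proof -
  have "(\<Sum>x\<in>T. card (Y x)) \<le> (\<Sum>x\<in>T. card {z\<in>X. p z = f x})"
    by (rule sum_mono, rule card_mono) (use assms in auto)
  also have "\<dots> = (\<Sum>s\<in>f`T. card {z\<in>X. p z = s})"
    by (simp add: sum.reindex[OF assms(3)])
  also have "\<dots> \<le> card X" by (rule fiber_sum) (use assms in auto)
  finally show ?thesis .
qed

lemma fiber_lower:
  assumes "finite X" "finite T" "\<And>s. s \<in> T \<Longrightarrow> \<exists>Y. Y \<subseteq> {z\<in>X. p z = s} \<and> card Y \<ge> t"
  shows "t * card T \<le> card X"
proof -
  have "t * card T = (\<Sum>s\<in>T. t)" by simp
  also have "\<dots> \<le> (\<Sum>s\<in>T. card {z\<in>X. p z = s})"
  proof (rule sum_mono)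
    fix s assume "s \<in> T"
    then obtain Y where "Y \<subseteq> {z\<in>X. p z = s}" "card Y \<ge> t" using assms(3) by blast
    then show "t \<le> card {z\<in>X. p z = s}" using card_mono[of "{z\<in>X. p z = s}" Y] assms(1) by force
  qed
  also have "\<dots> \<le> card X" by (rule fiber_sum) (use assms in auto)
  finally show ?thesis .
qed

lemma level_set:
  fixes g :: "'b \<Rightarrow> nat"
  assumes "finite B" "\<And>x. x \<in> B \<Longrightarrow> g x \<ge> 1" "(\<Sum>x\<in>B. g x) = N" "N \<ge> 1"
  shows "\<exists>t\<ge>1. real t * real (card {x\<in>B. t \<le> g x}) \<ge> real N / Lg N"
proof (rule ccontr)
  assume H: "\<not> ?thesis"
  have LgP: "Lg N > 0" using Lg_ge1[OF assms(4)] by simp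
  have le: "g x \<le> N" if "x \<in> B" for x
    by (metis assms(1) assms(3) member_le_sum zero_le that)
  have "(\<Sum>t\<in>{1..N}. card {x\<in>B. t \<le> g x}) = (\<Sum>t\<in>{1..N}. \<Sum>x\<in>B. (if t \<le> g x then 1 else 0::nat))"
  proof (rule sum.cong[OF refl])
    fix t show "card {x\<in>B. t \<le> g x} = (\<Sum>x\<in>B. (if t \<le> g x then 1 else 0::nat))"
      using assms(1) by (simp add: sum.If_cases Int_def conj_commute)
  qed
  also have "\<dots> = (\<Sum>x\<in>B. \<Sum>t\<in>{1..N}. (if t \<le> g x then 1 else 0::nat))"
    by (rule sum.swap)
  also have "\<dots> = (\<Sum>x\<in>B. g x)"
  proof (rule sum.cong[OF refl])
    fix x assume "x \<in> B"
    have "{1..N} \<inter> {t. t \<le> g x} = {1..g x}" using le[OF \<open>x\<in>B\<close>] by auto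
    then show "(\<Sum>t\<in>{1..N}. (if t \<le> g x then 1 else 0::nat)) = g x"
      by (simp add: sum.If_cases)
  qed
  finally have eq: "(\<Sum>t\<in>{1..N}. card {x\<in>B. t \<le> g x}) = N" using assms(3) by simp
  have "real N = (\<Sum>t\<in>{1..N}. real (card {x\<in>B. t \<le> g x}))"
    using eq by (metis of_nat_sum)
  also have "\<dots> < (\<Sum>t\<in>{1..N}. real N / Lg N * inverse (real t))"
  proof (rule sum_strict_mono)
    fix t assume t: "t \<in> {1..N}"
    have "real t * real (card {x\<in>B. t \<le> g x}) < real N / Lg N" using H t by auto
    then show "real (card {x\<in>B. t \<le> g x}) < real N / Lg N * inverse (real t)"
      using t LgP by (simp add: field_simps)
  qed (use assms in auto)
  also have "\<dots> = real N / Lg N * harm N"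
    by (simp add: harm_def sum_distrib_left)
  also have "\<dots> \<le> real N / Lg N * Lg N"
    by (rule mult_left_mono[OF harm_le_Lg[OF assms(4)]]) (use LgP in simp)
  also have "\<dots> = real N" using LgP by simp
  finally show False by simp
qed




lemma key_ineq:
  fixes n t \<delta> :: real and m :: nat
  assumes n1: "n \<ge> 1" and t1: "t \<ge> 1" and dp: "\<delta> > 0" and m0: "m = 0 \<Longrightarrow> t \<le> 1"
  shows "(n*t) powr (1 + \<delta> / real (Suc m)) \<le> max (t * n powr (1+\<delta>)) (n * t powr (1 + \<delta> / real (max m 1)))"
proof (cases "m = 0")
  case True
  then have "t = 1" using m0 t1 by simp
  then show ?thesis using True by simp
next
  case False
  then have mm: "max m 1 = m" by simp
  have mp: "real m > 0" using False by simp
  have np: "n > 0" "t > 0" using n1 t1 by auto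
  have split: "(n*t) powr (1 + \<delta> / real (Suc m)) = n*t * (n*t) powr (\<delta> / real (Suc m))"
    using np by (simp add: powr_add)
  show ?thesis
  proof (cases "t \<le> n powr real m")
    case True
    have "n * t \<le> n * n powr real m" using True np by simp
    also have "\<dots> = n powr real (Suc m)" using np by (simp add: powr_add)
    finally have "(n*t) powr (\<delta> / real (Suc m)) \<le> (n powr real (Suc m)) powr (\<delta> / real (Suc m))"
      using np dp by (intro powr_mono2) auto
    also have "\<dots> = n powr \<delta>" by (simp add: powr_powr)
    finally have "(n*t) powr (1 + \<delta> / real (Suc m)) \<le> n*t * n powr \<delta>"
      unfolding split using np by (simp add: mult_left_mono)
    also have "\<dots> = t * n powr (1+\<delta>)" using np by (simp add: powr_add)
    finally show ?thesis by simp
  next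
    case False
    have "n = (n powr real m) powr (1 / real m)" using np mp by (simp add: powr_powr)
    also have "\<dots> \<le> t powr (1 / real m)" using False np mp by (intro powr_mono2) auto
    finally have "n * t \<le> t powr (1 / real m) * t" using np by simp
    also have "\<dots> = t powr (real (Suc m) / real m)" using np mp by (simp add: powr_add add_divide_distrib)
    finally have "(n*t) powr (\<delta> / real (Suc m)) \<le> (t powr (real (Suc m) / real m)) powr (\<delta> / real (Suc m))"
      using np dp by (intro powr_mono2) auto
    also have "\<dots> = t powr (\<delta> / real m)" by (simp add: powr_powr)
    finally have "(n*t) powr (1 + \<delta> / real (Suc m)) \<le> n*t * t powr (\<delta> / real m)"
      unfolding split using np by (simp add: mult_left_mono)
    also have "\<dots> = n * t powr (1 + \<delta> / real (max m 1))" using np mm by (simp add: powr_add)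
    finally show ?thesis by simp
  qed
qed




lemma real_sumset_img: "real_sumset B = (\<lambda>(a,b). a + b) ` (B \<times> B)"
  unfolding real_sumset_def by auto
lemma real_prodset_img: "real_prodset B = (\<lambda>(a,b). a * b) ` (B \<times> B)"
  unfolding real_prodset_def by auto

lemma log_factor:
  fixes D :: real
  obtains k E where "k > 0" "E \<ge> 0" "k \<le> 1" "\<And>N::nat. N \<ge> 2 \<Longrightarrow> k / Lg N powr E \<le> ln (real N) powr D"
proof (cases "D \<ge> 0")
  case True
  show ?thesis
  proof (rule that[of "min 1 (ln 2 powr D)" 0])
    fix N :: nat assume N: "N \<ge> 2"
    have "ln 2 \<le> ln (real N)" using N by simp
    then have "ln 2 powr D \<le> ln (real N) powr D" using True by (intro powr_mono2) auto
    then show "min 1 (ln 2 powr D) / Lg N powr 0 \<le> ln (real N) powr D" by (simp add: min_le_iff_disj)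
  qed auto
next
  case False
  show ?thesis
  proof (rule that[of 1 "-D"])
    fix N :: nat assume N: "N \<ge> 2"
    have lp: "ln (real N) > 0" using N by simp
    have "ln (real N) \<le> Lg N" unfolding Lg_def by simp
    then have "ln (real N) powr (-D) \<le> Lg N powr (-D)" using False lp by (intro powr_mono2) auto
    have Lp: "Lg N > 0" unfolding Lg_def using lp by simp
    then have "1 / Lg N powr (-D) \<le> 1 / ln (real N) powr (-D)" using lp \<open>ln (real N) powr (-D) \<le> Lg N powr (-D)\<close>
      by (intro divide_left_mono) auto
    also have "\<dots> = ln (real N) powr D" using lp by (simp add: powr_minus_divide[symmetric])
    finally show "1 / Lg N powr (-D) \<le> ln (real N) powr D" .
  qed (use False in auto)
qed

lemma oneD:
  assumes "sp_admissible \<delta>"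
  shows "\<exists>c1>0. \<exists>E1\<ge>0. \<forall>B::real set. finite B \<and> B \<noteq> {} \<longrightarrow>
     c1 * real (card B) powr (1+\<delta>) / Lg (card B) powr E1 \<le> real (card (real_sumset B)) + real (card (real_prodset B))"
proof -
  obtain C D where C: "C > 0" and H: "\<And>B::real set. finite B \<Longrightarrow> B \<noteq> {} \<Longrightarrow>
        real (card (real_sumset B)) + real (card (real_prodset B))
          \<ge> C * real (card B) powr (1 + \<delta>) * ln (real (card B)) powr D"
    using assms unfolding sp_admissible_def by blast
  obtain k E where k: "k > 0" "E \<ge> 0" "k \<le> 1" "\<And>N::nat. N \<ge> 2 \<Longrightarrow> k / Lg N powr E \<le> ln (real N) powr D"
    using log_factor by blast
  have c1p: "min 1 C * k > 0" using C k by simp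
  have "\<forall>B::real set. finite B \<and> B \<noteq> {} \<longrightarrow>
     min 1 C * k * real (card B) powr (1+\<delta>) / Lg (card B) powr E \<le> real (card (real_sumset B)) + real (card (real_prodset B))"
  proof (intro allI impI)
    fix B :: "real set" assume B: "finite B \<and> B \<noteq> {}"
    let ?N = "card B"
    have N1: "?N \<ge> 1" using B by (simp add: Suc_le_eq card_gt_0_iff)
    have fin: "finite (real_sumset B)" unfolding real_sumset_img using B by simp
    have ne: "real_sumset B \<noteq> {}" unfolding real_sumset_img using B by simp
    have R1: "1 \<le> real (card (real_sumset B)) + real (card (real_prodset B))"
    proof -
      have "card (real_sumset B) > 0" using fin ne by (simp add: card_gt_0_iff)
      then show ?thesis by simp
    qed
    show "min 1 C * k * real ?N powr (1+\<delta>) / Lg ?N powr E \<le> real (card (real_sumset B)) + real (card (real_prodset B))"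
    proof (cases "?N = 1")
      case True
      have "min 1 C * k \<le> 1" using C k by (simp add: min_le_iff_disj mult_le_one)
      then show ?thesis using True R1 unfolding Lg_def by simp
    next
      case False
      then have N2: "?N \<ge> 2" using N1 by simp
      have Pp: "real ?N powr (1+\<delta>) \<ge> 0" by simp
      have "min 1 C * k * real ?N powr (1+\<delta>) / Lg ?N powr E = min 1 C * real ?N powr (1+\<delta>) * (k / Lg ?N powr E)"
        by simp
      also have "\<dots> \<le> C * real ?N powr (1+\<delta>) * ln (real ?N) powr D"
        using k(4)[OF N2] C Pp k(1) by (intro mult_mono) (auto intro: mult_right_mono)
      also have "\<dots> \<le> real (card (real_sumset B)) + real (card (real_prodset B))" using H B by blast
      finally show ?thesis .
    qed
  qed
  then show ?thesis using c1p k(2) by blast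
qed



lemma weaken:
  fixes c c' E E' L X :: real
  assumes "c \<le> c'" "E' \<le> E" "L \<ge> 1" "X \<ge> 0" "c \<ge> 0"
  shows "c * X / L powr E \<le> c' * X / L powr E'"
proof -
  have "L powr E' \<le> L powr E" using assms by (intro powr_mono) auto
  then have "X / L powr E \<le> X / L powr E'" using assms by (intro divide_left_mono) auto
  then have "c * (X / L powr E) \<le> c' * (X / L powr E')"
    using assms by (intro mult_mono) auto
  then show ?thesis by simp
qed

lemma nz_case:
  fixes A :: "('a \<Rightarrow> real) set" and I :: "'a set"
  assumes dp: "\<delta> > 0" and c1: "c1 > 0" "E1 \<ge> 0"
   and H1: "\<And>B::real set. finite B \<Longrightarrow> B \<noteq> {} \<Longrightarrow> c1 * real (card B) powr (1+\<delta>) / Lg (card B) powr E1 \<le> real (card (real_sumset B)) + real (card (real_prodset B))"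
   and cm: "cm > 0" "Em \<ge> 0"
   and IH: "\<And>(J::'a set) (F::('a \<Rightarrow> real) set). finite J \<Longrightarrow> card J = m \<Longrightarrow> finite F \<Longrightarrow> F \<noteq> {} \<Longrightarrow> (\<forall>a\<in>F. \<forall>j. j\<notin>J \<longrightarrow> a j = 0) \<Longrightarrow> cm * real (card F) powr (1 + \<delta>/real(max m 1)) / Lg (card F) powr Em \<le> SS F"
   and I: "finite I" "card I = Suc m"
   and A: "finite A" "\<forall>a\<in>A. \<forall>j. j\<notin>I \<longrightarrow> a j = 0"
   and As: "As = {a\<in>A. \<forall>j\<in>I. a j \<noteq> 0}" "real (card A) \<le> 2 * real (card As)" "As \<noteq> {}"
  shows "min c1 (cm/2) / 2 powr (1 + \<delta>/real(Suc m)) * real (card A) powr (1 + \<delta>/real(Suc m)) / Lg (card A) powr (max E1 Em + (1 + \<delta>/real(Suc m))) \<le> SS A"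
proof -
  define e where "e = 1 + \<delta>/real(Suc m)"
  define em where "em = 1 + \<delta>/real(max m 1)"
  define N where "N = card A"
  define L where "L = Lg N"
  define c0 where "c0 = min c1 (cm/2)"
  define E0 where "E0 = max E1 Em"
  have c0p: "c0 > 0" using c1 cm unfolding c0_def by simp
  have E0p: "E0 \<ge> 0" using c1 unfolding E0_def by simp
  have ep: "e \<ge> 1" "em \<ge> 1" unfolding e_def em_def using dp by auto
  obtain i where i: "i \<in> I" using I by (metis card.empty ex_in_conv nat.distinct(1))
  have finAs: "finite As" using A As by simp
  have AsA: "As \<subseteq> A" using As by auto
  define Ns where "Ns = card As"
  have Ns1: "Ns \<ge> 1" using finAs As(3) unfolding Ns_def by (simp add: Suc_le_eq card_gt_0_iff)
  have NsN: "Ns \<le> N" unfolding Ns_def N_def using card_mono[OF A(1) AsA] .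
  have N1: "N \<ge> 1" using Ns1 NsN by simp
  have L1: "L \<ge> 1" unfolding L_def using Lg_ge1[OF N1] .
  define B where "B = (\<lambda>a. a i) ` As"
  define G where "G x = {a\<in>As. a i = x}" for x
  have finB: "finite B" unfolding B_def using finAs by simp
  have finG: "finite (G x)" for x unfolding G_def using finAs by simp
  have GA: "G x \<subseteq> A" for x unfolding G_def using AsA by auto
  have Gmem: "a \<in> G x \<Longrightarrow> a \<in> A \<and> a i = x \<and> (\<forall>j\<in>I. a j \<noteq> 0)" for a x
    unfolding G_def As(1) by auto
  have sumG: "(\<Sum>x\<in>B. card (G x)) = Ns"
  proof -
    have "(\<Sum>x\<in>B. card (G x)) = card (\<Union>x\<in>B. G x)"
      by (rule card_UN_disjoint[symmetric]) (use finB finG in \<open>auto simp: G_def\<close>)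
    also have "(\<Union>x\<in>B. G x) = As" unfolding B_def G_def by auto
    finally show ?thesis unfolding Ns_def .
  qed
  have G1: "x \<in> B \<Longrightarrow> card (G x) \<ge> 1" for x
    using finG[of x] unfolding B_def G_def by (auto simp: Suc_le_eq card_gt_0_iff)
  obtain t where t1: "t \<ge> 1" and tn: "real t * real (card {x\<in>B. t \<le> card (G x)}) \<ge> real Ns / Lg Ns"
    using level_set[OF finB G1 sumG Ns1] by blast
  define Bt where "Bt = {x\<in>B. t \<le> card (G x)}"
  define n where "n = card Bt"
  have finBt: "finite Bt" unfolding Bt_def using finB by simp
  have LgNs: "Lg Ns > 0" using Lg_ge1[OF Ns1] by simp
  have "real Ns / Lg Ns > 0" using Ns1 LgNs by simp
  then have n1: "n \<ge> 1" using tn unfolding n_def Bt_def by (cases "card {x\<in>B. t \<le> card (G x)}") auto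
  have Btne: "Bt \<noteq> {}" using n1 unfolding n_def by auto
  have Gt: "x \<in> Bt \<Longrightarrow> t \<le> card (G x)" for x unfolding Bt_def by simp
  have Gne: "x \<in> Bt \<Longrightarrow> G x \<noteq> {}" for x using Gt[of x] t1 by auto
  have nN: "n \<le> N"
  proof -
    have "card Bt \<le> card B" using finB unfolding Bt_def by (intro card_mono) auto
    also have "card B \<le> card As" unfolding B_def using finAs by (rule card_image_le)
    finally show ?thesis unfolding n_def using NsN Ns_def by simp
  qed
  define A' where "A' = {a\<in>As. a i \<in> Bt}"
  have A'A: "A' \<subseteq> A" unfolding A'_def using AsA by auto
  have finA': "finite A'" using A'A A(1) finite_subset by blast
  have GA': "x \<in> Bt \<Longrightarrow> G x \<subseteq> A'" for x unfolding A'_def G_def by auto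
  have s1: "t * card (real_sumset Bt) \<le> card (fsum A')"
  proof (rule fiber_lower[where p = "\<lambda>z. z i"])
    show "finite (fsum A')" using fsum_finite[OF finA'] .
    show "finite (real_sumset Bt)" unfolding real_sumset_img using finBt by simp
    fix s assume "s \<in> real_sumset Bt"
    then obtain x y where xy: "x \<in> Bt" "y \<in> Bt" "s = x + y" unfolding real_sumset_def by auto
    obtain a where a: "a \<in> G x" using Gne[OF xy(1)] by auto
    let ?Y = "(\<lambda>b. (\<lambda>j. a j + b j)) ` G y"
    have "?Y \<subseteq> {z \<in> fsum A'. z i = s}"
      using a GA'[OF xy(1)] GA'[OF xy(2)] Gmem[OF a] xy(3) by (auto intro!: fsum_mem dest: Gmem)
    moreover have "card ?Y = card (G y)"
      by (rule card_image) (auto simp: inj_on_def fun_eq_iff)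
    ultimately show "\<exists>Y. Y \<subseteq> {z \<in> fsum A'. z i = s} \<and> t \<le> card Y" using Gt[OF xy(2)] by metis
  qed
  have p1: "t * card (real_prodset Bt) \<le> card (fprod A')"
  proof (rule fiber_lower[where p = "\<lambda>z. z i"])
    show "finite (fprod A')" using fprod_finite[OF finA'] .
    show "finite (real_prodset Bt)" unfolding real_prodset_img using finBt by simp
    fix s assume "s \<in> real_prodset Bt"
    then obtain x y where xy: "x \<in> Bt" "y \<in> Bt" "s = x * y" unfolding real_prodset_def by auto
    obtain a where a: "a \<in> G x" using Gne[OF xy(1)] by auto
    let ?Y = "(\<lambda>b. (\<lambda>j. a j * b j)) ` G y"
    have "?Y \<subseteq> {z \<in> fprod A'. z i = s}"
      using a GA'[OF xy(1)] GA'[OF xy(2)] Gmem[OF a] xy(3) by (auto intro!: fprod_mem dest: Gmem)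
    moreover have "inj_on (\<lambda>b. (\<lambda>j. a j * b j)) (G y)"
    proof (rule inj_onI)
      fix b b' assume b: "b \<in> G y" "b' \<in> G y" and eq: "(\<lambda>j. a j * b j) = (\<lambda>j. a j * b' j)"
      show "b = b'"
      proof
        fix j
        show "b j = b' j"
        proof (cases "j \<in> I")
          case True
          then have "a j \<noteq> 0" using Gmem[OF a] by auto
          moreover have "a j * b j = a j * b' j" using eq by (metis)
          ultimately show ?thesis by simp
        next
          case False
          have bA: "b \<in> A" "b' \<in> A" using Gmem[OF b(1)] Gmem[OF b(2)] by auto
          show ?thesis using bspec[OF A(2) bA(1)] bspec[OF A(2) bA(2)] False by simp
        qed
      qed
    qed
    then have "card ?Y = card (G y)" by (rule card_image)
    ultimately show "\<exists>Y. Y \<subseteq> {z \<in> fprod A'. z i = s} \<and> t \<le> card Y" using Gt[OF xy(2)] by metis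
  qed
  have B1: "real t * (c1 * real n powr (1+\<delta>) / Lg n powr E1) \<le> SS A"
  proof -
    have "real t * (c1 * real n powr (1+\<delta>) / Lg n powr E1) \<le> real t * (real (card (real_sumset Bt)) + real (card (real_prodset Bt)))"
      using H1[OF finBt Btne] unfolding n_def by (intro mult_left_mono) auto
    also have "\<dots> \<le> SS A'" unfolding SS_def using s1 p1
      by (simp add: distrib_left) (metis of_nat_add of_nat_le_iff of_nat_mult add_mono)
    also have "\<dots> \<le> SS A" by (rule SS_mono[OF A'A A(1)])
    finally show ?thesis .
  qed
  define F where "F x = (\<lambda>a. a(i:=0)) ` G x" for x
  have cardF: "card (F x) = card (G x)" for x
    unfolding F_def
  proof (rule card_image, rule inj_onI)
    fix a b assume ab: "a \<in> G x" "b \<in> G x" "a(i:=0) = b(i:=0)"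
    have "a i = b i" using Gmem[OF ab(1)] Gmem[OF ab(2)] by simp
    then show "a = b" using ab(3) by (metis fun_upd_triv fun_upd_upd)
  qed
  have finF: "finite (F x)" for x unfolding F_def using finG by simp
  have suppF: "\<forall>f\<in>F x. \<forall>j. j \<notin> I - {i} \<longrightarrow> f j = 0" for x
  proof (intro ballI allI impI)
    fix f j assume f: "f \<in> F x" and j: "j \<notin> I - {i}"
    then obtain a where a: "a \<in> G x" "f = a(i:=0)" unfolding F_def by auto
    show "f j = 0"
    proof (cases "j = i")
      case True then show ?thesis using a by simp
    next
      case False
      then have "j \<notin> I" using j by simp
      then show ?thesis using a bspec[OF A(2), of a] Gmem[OF a(1)] False by simp
    qed
  qed
  have cardI': "card (I - {i}) = m" using I i by simp
  have SSF: "SS (F x) \<le> real (card (fsum (G x))) + real (card (fprod (G x)))" for x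
  proof -
    have "fsum (F x) \<subseteq> (\<lambda>z. z(i:=0)) ` fsum (G x)"
    proof
      fix z assume "z \<in> fsum (F x)"
      then obtain a b where ab: "a \<in> G x" "b \<in> G x" "z = (\<lambda>j. (a(i:=0)) j + (b(i:=0)) j)"
        unfolding fsum_def F_def by auto
      then have "z = (\<lambda>j. a j + b j)(i:=0)" by (auto simp: fun_eq_iff)
      then show "z \<in> (\<lambda>z. z(i:=0)) ` fsum (G x)" using fsum_mem[OF ab(1,2)] by blast
    qed
    then have 1: "card (fsum (F x)) \<le> card (fsum (G x))"
      by (meson card_image_le card_mono finG finite_imageI fsum_finite order_trans)
    have "fprod (F x) \<subseteq> (\<lambda>z. z(i:=0)) ` fprod (G x)"
    proof
      fix z assume "z \<in> fprod (F x)"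
      then obtain a b where ab: "a \<in> G x" "b \<in> G x" "z = (\<lambda>j. (a(i:=0)) j * (b(i:=0)) j)"
        unfolding fprod_def F_def by auto
      then have "z = (\<lambda>j. a j * b j)(i:=0)" by (auto simp: fun_eq_iff)
      then show "z \<in> (\<lambda>z. z(i:=0)) ` fprod (G x)" using fprod_mem[OF ab(1,2)] by blast
    qed
    then have 2: "card (fprod (F x)) \<le> card (fprod (G x))"
      by (meson card_image_le card_mono finG finite_imageI fprod_finite order_trans)
    show ?thesis unfolding SS_def using 1 2 by simp
  qed
  have sum_s: "(\<Sum>x\<in>Bt. card (fsum (G x))) \<le> card (fsum A)"
  proof (rule fiber_sum_inj[where f = "\<lambda>x. x + x" and p = "\<lambda>z. z i"])
    show "finite (fsum A)" using fsum_finite[OF A(1)] .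
    show "finite Bt" by fact
    show "inj_on (\<lambda>x::real. x + x) Bt" by (auto simp: inj_on_def)
    fix x assume "x \<in> Bt"
    show "fsum (G x) \<subseteq> {z \<in> fsum A. z i = x + x}"
    proof
      fix z assume "z \<in> fsum (G x)"
      then obtain a b where ab: "a \<in> G x" "b \<in> G x" "z = (\<lambda>j. a j + b j)" unfolding fsum_def by auto
      show "z \<in> {z \<in> fsum A. z i = x + x}" using Gmem[OF ab(1)] Gmem[OF ab(2)] ab(3) fsum_mem[of a A b] by auto
    qed
  qed
  have zB: "0 \<notin> Bt" unfolding Bt_def B_def using i As(1) by auto
  have sum_p_half: "(\<Sum>x\<in>{x\<in>Bt. P x}. card (fprod (G x))) \<le> card (fprod A)"
    if P: "\<And>x y. P x \<Longrightarrow> P y \<Longrightarrow> x * x = y * y \<Longrightarrow> x = y" for P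
  proof (rule fiber_sum_inj[where f = "\<lambda>x. x * x" and p = "\<lambda>z. z i"])
    show "finite (fprod A)" using fprod_finite[OF A(1)] .
    show "finite {x\<in>Bt. P x}" using finBt by simp
    show "inj_on (\<lambda>x::real. x * x) {x\<in>Bt. P x}" using P by (auto simp: inj_on_def)
    fix x assume "x \<in> {x\<in>Bt. P x}"
    show "fprod (G x) \<subseteq> {z \<in> fprod A. z i = x * x}"
    proof
      fix z assume "z \<in> fprod (G x)"
      then obtain a b where ab: "a \<in> G x" "b \<in> G x" "z = (\<lambda>j. a j * b j)" unfolding fprod_def by auto
      show "z \<in> {z \<in> fprod A. z i = x * x}" using Gmem[OF ab(1)] Gmem[OF ab(2)] ab(3) fprod_mem[of a A b] by auto
    qed
  qed
  have sum_p: "(\<Sum>x\<in>Bt. card (fprod (G x))) \<le> 2 * card (fprod A)"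
  proof -
    have nz: "x \<in> Bt \<Longrightarrow> x \<noteq> 0" for x using zB by auto
    have eqB: "Bt = {x\<in>Bt. x > 0} \<union> {x\<in>Bt. x < 0}"
    proof (rule set_eqI)
      fix x show "x \<in> Bt \<longleftrightarrow> x \<in> {x\<in>Bt. x > 0} \<union> {x\<in>Bt. x < 0}"
        using nz[of x] by (cases "x > 0") auto
    qed
    have "(\<Sum>x\<in>Bt. card (fprod (G x))) = (\<Sum>x\<in>{x\<in>Bt. x > 0}. card (fprod (G x))) + (\<Sum>x\<in>{x\<in>Bt. x < 0}. card (fprod (G x)))"
    proof -
      have "(\<Sum>x\<in>Bt. card (fprod (G x))) = (\<Sum>x\<in>{x\<in>Bt. x > 0} \<union> {x\<in>Bt. x < 0}. card (fprod (G x)))"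
        using eqB by (rule arg_cong)
      also have "\<dots> = (\<Sum>x\<in>{x\<in>Bt. x > 0}. card (fprod (G x))) + (\<Sum>x\<in>{x\<in>Bt. x < 0}. card (fprod (G x)))"
        by (rule sum.union_disjoint) (use finBt in auto)
      finally show ?thesis .
    qed
    also have "\<dots> \<le> card (fprod A) + card (fprod A)"
    proof (rule add_mono)
      show "(\<Sum>x\<in>{x\<in>Bt. x > 0}. card (fprod (G x))) \<le> card (fprod A)"
        by (rule sum_p_half) (metis abs_of_pos real_sqrt_abs2)
      show "(\<Sum>x\<in>{x\<in>Bt. x < 0}. card (fprod (G x))) \<le> card (fprod A)"
        by (rule sum_p_half) (metis abs_of_neg real_sqrt_abs2 minus_equation_iff)
    qed
    finally show ?thesis by simp
  qed
  have sumSSF: "(\<Sum>x\<in>Bt. SS (F x)) \<le> 2 * SS A"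
  proof -
    have "(\<Sum>x\<in>Bt. SS (F x)) \<le> (\<Sum>x\<in>Bt. real (card (fsum (G x))) + real (card (fprod (G x))))"
      by (rule sum_mono) (rule SSF)
    also have "\<dots> = real (\<Sum>x\<in>Bt. card (fsum (G x))) + real (\<Sum>x\<in>Bt. card (fprod (G x)))"
      by (simp add: sum.distrib)
    also have "\<dots> \<le> real (card (fsum A)) + real (2 * card (fprod A))"
      using sum_s sum_p by (intro add_mono) (simp_all only: of_nat_le_iff)
    also have "\<dots> \<le> 2 * SS A" unfolding SS_def by simp
    finally show ?thesis .
  qed
  have lowF: "cm * real t powr em / L powr Em \<le> SS (F x)" if x: "x \<in> Bt" for x
  proof -
    have Fne: "F x \<noteq> {}" unfolding F_def using Gne[OF x] by simp
    have cF: "card (F x) \<ge> t" using cardF Gt[OF x] by simp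
    have cFN: "card (F x) \<le> N" using cardF card_mono[OF A(1) GA[of x]] unfolding N_def by simp
    have cF1: "card (F x) \<ge> 1" using cF t1 by simp
    have "cm * real t powr em / L powr Em \<le> cm * real (card (F x)) powr em / Lg (card (F x)) powr Em"
    proof -
      have "real t powr em \<le> real (card (F x)) powr em" using cF t1 ep by (intro powr_mono2) auto
      moreover have "Lg (card (F x)) powr Em \<le> L powr Em" unfolding L_def
        using Lg_mono[OF cF1 cFN] Lg_ge1[OF cF1] cm by (intro powr_mono2) auto
      moreover have "Lg (card (F x)) powr Em > 0" using Lg_ge1[OF cF1] by simp
      ultimately show ?thesis using cm
        by (intro mult_left_mono divide_mono) auto
    qed
    also have "\<dots> \<le> SS (F x)" unfolding em_def
      using IH[of "I - {i}" "F x"] I cardI' finF[of x] Fne suppF[of x] by simp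
    finally show ?thesis .
  qed
  have B2: "real n * (cm * real t powr em / L powr Em) \<le> 2 * SS A"
  proof -
    have "real n * (cm * real t powr em / L powr Em) = (\<Sum>x\<in>Bt. cm * real t powr em / L powr Em)"
      unfolding n_def by simp
    also have "\<dots> \<le> (\<Sum>x\<in>Bt. SS (F x))" by (rule sum_mono) (rule lowF)
    also have "\<dots> \<le> 2 * SS A" by (rule sumSSF)
    finally show ?thesis .
  qed
  have mt: "real t \<le> 1" if m0: "m = 0"
  proof -
    have "I - {i} = {}" using cardI' m0 I(1) by simp
    obtain x where x: "x \<in> Bt" using Btne by auto
    have "F x \<subseteq> {(\<lambda>_. 0)}" using suppF[of x] \<open>I - {i} = {}\<close> by (auto simp: fun_eq_iff)
    then have "card (F x) \<le> card {(\<lambda>_::'a. 0::real)}" by (intro card_mono) auto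
    then have "card (F x) \<le> 1" by simp
    then show ?thesis using Gt[OF x] cardF[of x] by simp
  qed
  have key: "(real n * real t) powr e \<le> max (real t * real n powr (1+\<delta>)) (real n * real t powr em)"
    unfolding e_def em_def by (rule key_ineq) (use n1 t1 dp mt in auto)
  have Lgn: "Lg n \<le> L" "Lg n \<ge> 1" unfolding L_def using Lg_mono[OF n1 nN] Lg_ge1[OF n1] by auto
  have C1: "c0 * (real t * real n powr (1+\<delta>)) / L powr E0 \<le> SS A"
  proof -
    have X0: "real t * real n powr (1+\<delta>) \<ge> 0" by simp
    have "c0 * (real t * real n powr (1+\<delta>)) / L powr E0 \<le> c1 * (real t * real n powr (1+\<delta>)) / L powr E1"
      by (rule weaken) (use c0p L1 X0 in \<open>auto simp: c0_def E0_def\<close>)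
    also have "\<dots> \<le> c1 * (real t * real n powr (1+\<delta>)) / Lg n powr E1"
    proof -
      have "Lg n powr E1 \<le> L powr E1" using Lgn c1 by (intro powr_mono2) auto
      moreover have "Lg n powr E1 > 0" using Lgn by simp
      moreover have "L powr E1 > 0" using L1 by simp
      ultimately show ?thesis using c1 X0 by (intro divide_left_mono) auto
    qed
    also have "\<dots> = real t * (c1 * real n powr (1+\<delta>) / Lg n powr E1)" by simp
    also have "\<dots> \<le> SS A" by (rule B1)
    finally show ?thesis .
  qed
  have C2: "c0 * (real n * real t powr em) / L powr E0 \<le> SS A"
  proof -
    have X0: "real n * real t powr em \<ge> 0" by simp
    have "c0 * (real n * real t powr em) / L powr E0 \<le> (cm/2) * (real n * real t powr em) / L powr Em"
      by (rule weaken) (use c0p L1 X0 in \<open>auto simp: c0_def E0_def\<close>)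
    also have "\<dots> = (real n * (cm * real t powr em / L powr Em)) / 2" by (simp add: ac_simps)
    also have "\<dots> \<le> SS A"
    proof -
      have gen: "\<And>X S::real. X \<le> 2*S \<Longrightarrow> X/2 \<le> S" by simp
      show ?thesis by (rule gen[OF B2])
    qed
    finally show ?thesis .
  qed
  have LE0: "L powr E0 > 0" using L1 by simp
  have C3: "c0 * (real n * real t) powr e / L powr E0 \<le> SS A"
  proof -
    have "c0 * (real n * real t) powr e / L powr E0 \<le> c0 * max (real t * real n powr (1+\<delta>)) (real n * real t powr em) / L powr E0"
      using key c0p LE0 by (intro divide_right_mono mult_left_mono) auto
    also have "\<dots> \<le> SS A" using C1 C2 by (simp add: max_def)
    finally show ?thesis .
  qed
  have nt: "real N / (2 * L) \<le> real n * real t"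
  proof -
    have LgNs: "Lg Ns \<le> L" "Lg Ns > 0" unfolding L_def using Lg_mono[OF Ns1 NsN] Lg_ge1[OF Ns1] by auto
    have "real N / (2 * L) = (real N / 2) / L" by simp
    also have "\<dots> \<le> real Ns / L" using As(2) L1 unfolding N_def Ns_def by (intro divide_right_mono) auto
    also have "\<dots> \<le> real Ns / Lg Ns" using LgNs by (intro divide_left_mono) auto
    also have "\<dots> \<le> real n * real t" using tn unfolding n_def Bt_def by (simp add: mult.commute)
    finally show ?thesis .
  qed
  have "c0 / 2 powr e * real N powr e / L powr (E0 + e) = c0 * (real N / (2 * L)) powr e / L powr E0"
    using L1 by (simp add: powr_add powr_divide powr_mult)
  also have "\<dots> \<le> c0 * (real n * real t) powr e / L powr E0"
    using nt c0p LE0 L1 ep by (intro divide_right_mono mult_left_mono powr_mono2) auto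
  also have "\<dots> \<le> SS A" by (rule C3)
  finally show ?thesis unfolding c0_def e_def E0_def N_def L_def .
qed



lemma SS_ge1:
  assumes "finite A" "A \<noteq> {}"
  shows "SS A \<ge> 1"
proof -
  have "fsum A \<noteq> {}" using assms unfolding fsum_def by auto
  then have "card (fsum A) > 0" using fsum_finite[OF assms(1)] by (simp add: card_gt_0_iff)
  then show ?thesis unfolding SS_def by simp
qed

lemma main_ind:
  fixes \<delta> c1 E1 :: real
  assumes dp: "\<delta> > 0" and c1: "c1 > 0" "E1 \<ge> 0"
   and H1: "\<And>B::real set. finite B \<Longrightarrow> B \<noteq> {} \<Longrightarrow> c1 * real (card B) powr (1+\<delta>) / Lg (card B) powr E1 \<le> real (card (real_sumset B)) + real (card (real_prodset B))"
  shows "\<exists>c>0. \<exists>E\<ge>0. \<forall>(I::'a set) (A::('a\<Rightarrow>real) set). finite I \<and> card I = d \<and> finite A \<and> A \<noteq> {} \<and> (\<forall>a\<in>A. \<forall>j. j\<notin>I \<longrightarrow> a j = 0) \<longrightarrow>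
     c * real (card A) powr (1 + \<delta>/real(max d 1)) / Lg (card A) powr E \<le> SS A"
proof (induction d)
  case 0
  have "\<forall>(I::'a set) (A::('a\<Rightarrow>real) set). finite I \<and> card I = 0 \<and> finite A \<and> A \<noteq> {} \<and> (\<forall>a\<in>A. \<forall>j. j\<notin>I \<longrightarrow> a j = 0) \<longrightarrow>
     1 * real (card A) powr (1 + \<delta>/real(max 0 1)) / Lg (card A) powr 0 \<le> SS A"
  proof (intro allI impI)
    fix I :: "'a set" and A :: "('a\<Rightarrow>real) set"
    assume H: "finite I \<and> card I = 0 \<and> finite A \<and> A \<noteq> {} \<and> (\<forall>a\<in>A. \<forall>j. j\<notin>I \<longrightarrow> a j = 0)"
    then have "I = {}" using card_0_eq by blast
    then have "A \<subseteq> {(\<lambda>_. 0)}" using H by (auto simp: fun_eq_iff)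
    then have "card A \<le> card {(\<lambda>_::'a. 0::real)}" by (intro card_mono) auto
    moreover have "card A \<ge> 1" using H by (simp add: Suc_le_eq card_gt_0_iff)
    ultimately have "card A = 1" by simp
    then show "1 * real (card A) powr (1 + \<delta>/real(max 0 1)) / Lg (card A) powr 0 \<le> SS A"
      using SS_ge1[of A] H by simp
  qed
  then show ?case using zero_less_one[where 'a=real] order_refl[of "0::real"] by blast
next
  case (Suc m)
  obtain cm Em where cm: "cm > 0" "Em \<ge> 0" and IH: "\<And>(J::'a set) (F::('a \<Rightarrow> real) set). finite J \<Longrightarrow> card J = m \<Longrightarrow> finite F \<Longrightarrow> F \<noteq> {} \<Longrightarrow> (\<forall>a\<in>F. \<forall>j. j\<notin>J \<longrightarrow> a j = 0) \<Longrightarrow> cm * real (card F) powr (1 + \<delta>/real(max m 1)) / Lg (card F) powr Em \<le> SS F"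
    using Suc.IH by blast
  define e where "e = 1 + \<delta>/real(Suc m)"
  define em where "em = 1 + \<delta>/real(max m 1)"
  have ep: "e \<ge> 1" "e \<le> em" unfolding e_def em_def using dp by (auto intro!: divide_left_mono)
  define cz where "cz = cm / (2 * real (Suc m)) powr e"
  define cn where "cn = min c1 (cm/2) / 2 powr e"
  define c where "c = min cz cn"
  define E where "E = max Em (max E1 Em + e)"
  have czp: "cz > 0" unfolding cz_def using cm by simp
  have cnp: "cn > 0" unfolding cn_def using cm c1 by simp
  have cp: "c > 0" unfolding c_def using czp cnp by simp
  have Ep: "E \<ge> 0" unfolding E_def using cm by simp
  have c_cn: "c \<le> cn" and c_cz: "c \<le> cz" unfolding c_def by auto
  have E_1: "max E1 Em + e \<le> E" and E_2: "Em \<le> E" unfolding E_def by auto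
  have c0: "c \<ge> 0" using cp by simp
  have "\<forall>(I::'a set) (A::('a\<Rightarrow>real) set). finite I \<and> card I = Suc m \<and> finite A \<and> A \<noteq> {} \<and> (\<forall>a\<in>A. \<forall>j. j\<notin>I \<longrightarrow> a j = 0) \<longrightarrow>
     c * real (card A) powr e / Lg (card A) powr E \<le> SS A"
  proof (intro allI impI)
    fix I :: "'a set" and A :: "('a\<Rightarrow>real) set"
    assume H: "finite I \<and> card I = Suc m \<and> finite A \<and> A \<noteq> {} \<and> (\<forall>a\<in>A. \<forall>j. j\<notin>I \<longrightarrow> a j = 0)"
    then have I: "finite I" "card I = Suc m" and A: "finite A" "\<forall>a\<in>A. \<forall>j. j\<notin>I \<longrightarrow> a j = 0" and Ane: "A \<noteq> {}"
      by auto
    define N where "N = card A"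
    define L where "L = Lg N"
    have N1: "N \<ge> 1" unfolding N_def using A Ane by (simp add: Suc_le_eq card_gt_0_iff)
    have L1: "L \<ge> 1" unfolding L_def using Lg_ge1[OF N1] .
    have X0: "real N powr e \<ge> 0" by simp
    define As where "As = {a\<in>A. \<forall>j\<in>I. a j \<noteq> 0}"
    show "c * real (card A) powr e / Lg (card A) powr E \<le> SS A"
    proof (cases "As \<noteq> {} \<and> real (card A) \<le> 2 * real (card As)")
      case True
      have "c * real N powr e / L powr E \<le> cn * real N powr e / L powr (max E1 Em + e)"
        by (rule weaken[OF c_cn E_1 L1 X0 c0])
      also have "\<dots> \<le> SS A"
        unfolding cn_def e_def N_def L_def
        by (rule nz_case[OF dp c1 H1 cm IH I A As_def]) (use True in auto)
      finally show ?thesis unfolding N_def L_def .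
    next
      case False
      then have small: "2 * real (card As) < real N" using N1 unfolding N_def by auto
      define Z where "Z j = {a\<in>A. a j = 0}" for j
      have "\<exists>j\<in>I. real (card (Z j)) \<ge> real N / (2 * real (Suc m))"
      proof (rule ccontr)
        assume "\<not> ?thesis"
        then have lt: "\<And>j. j \<in> I \<Longrightarrow> real (card (Z j)) < real N / (2 * real (Suc m))" by auto
        have "A - As \<subseteq> (\<Union>j\<in>I. Z j)" unfolding As_def Z_def by auto
        then have "card (A - As) \<le> card (\<Union>j\<in>I. Z j)" using A I by (intro card_mono) (auto simp: Z_def)
        also have "\<dots> \<le> (\<Sum>j\<in>I. card (Z j))" by (rule card_UN_le[OF I(1)])
        finally have "real (card (A - As)) \<le> (\<Sum>j\<in>I. real (card (Z j)))" by (metis of_nat_le_iff of_nat_sum)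
        also have "\<dots> < (\<Sum>j\<in>I. real N / (2 * real (Suc m)))"
          using I lt by (intro sum_strict_mono) auto
        also have "\<dots> = real (Suc m) * (real N / (2 * real (Suc m)))" using I by simp
        also have "\<dots> = real N / 2"
        proof -
          have "real (Suc m) > 0" by simp
          then show ?thesis by (simp add: field_simps)
        qed
        finally have "real (card (A - As)) < real N / 2" .
        moreover have "card (A - As) = N - card As" unfolding N_def
          using A by (intro card_Diff_subset) (auto simp: As_def)
        moreover have "card As \<le> N" unfolding N_def As_def using A by (intro card_mono) auto
        ultimately show False using small by (simp add: of_nat_diff)
      qed
      then obtain j where j: "j \<in> I" and Zj: "real (card (Z j)) \<ge> real N / (2 * real (Suc m))" by blast
      have finZ: "finite (Z j)" unfolding Z_def using A by simp
      have "real N / (2 * real (Suc m)) > 0" using N1 by simp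
      then have cZ1: "card (Z j) \<ge> 1" using Zj by linarith
      have Zne: "Z j \<noteq> {}" using cZ1 by auto
      have ZN: "card (Z j) \<le> N" unfolding N_def Z_def using A by (intro card_mono) auto
      have suppZ: "\<forall>a\<in>Z j. \<forall>k. k \<notin> I - {j} \<longrightarrow> a k = 0" using A unfolding Z_def by auto
      have cI': "card (I - {j}) = m" using I j by simp
      have IHZ: "cm * real (card (Z j)) powr em / Lg (card (Z j)) powr Em \<le> SS (Z j)"
        unfolding em_def using IH[of "I - {j}" "Z j"] I cI' finZ Zne suppZ by simp
      have SSZ: "SS (Z j) \<le> SS A" by (rule SS_mono) (use A in \<open>auto simp: Z_def\<close>)
      have "c * real N powr e / L powr E \<le> cz * real N powr e / L powr Em"
        by (rule weaken[OF c_cz E_2 L1 X0 c0])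
      also have "\<dots> = cm * (real N / (2 * real (Suc m))) powr e / L powr Em"
        unfolding cz_def by (simp add: powr_divide)
      also have "\<dots> \<le> cm * real (card (Z j)) powr em / Lg (card (Z j)) powr Em"
      proof -
        have "(real N / (2 * real (Suc m))) powr e \<le> real (card (Z j)) powr e"
          using Zj ep by (intro powr_mono2) auto
        also have "\<dots> \<le> real (card (Z j)) powr em" using cZ1 ep by (intro powr_mono) auto
        finally have 1: "(real N / (2 * real (Suc m))) powr e \<le> real (card (Z j)) powr em" .
        have 2: "Lg (card (Z j)) powr Em \<le> L powr Em" unfolding L_def
          using Lg_mono[OF cZ1 ZN] Lg_ge1[OF cZ1] cm by (intro powr_mono2) auto
        have 3: "Lg (card (Z j)) powr Em > 0" using Lg_ge1[OF cZ1] by simp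
        show ?thesis using 1 2 3 cm by (intro mult_left_mono divide_mono) auto
      qed
      also have "\<dots> \<le> SS A" using IHZ SSZ by linarith
      finally show ?thesis unfolding N_def L_def .
    qed
  qed
  moreover have mx: "real (max (Suc m) 1) = real (Suc m)" by simp
  ultimately show ?case unfolding mx using cp Ep unfolding e_def by blast
qed




definition dg :: "real^'n^'n \<Rightarrow> ('n \<Rightarrow> real)" where "dg M = (\<lambda>i. M $ i $ i)"

lemma diag_eq: "diagonal_mat a \<Longrightarrow> diagonal_mat b \<Longrightarrow> dg a = dg b \<Longrightarrow> a = b"
proof -
  assume da: "diagonal_mat a" and db: "diagonal_mat b" and e: "dg a = dg b"
  have "a $ i $ j = b $ i $ j" for i j
  proof (cases "i = j")
    case True
    then show ?thesis using fun_cong[OF e, of i] unfolding dg_def by simp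
  next
    case False
    then show ?thesis using da db unfolding diagonal_mat_def by simp
  qed
  then show "a = b" by (simp add: vec_eq_iff)
qed

lemma diag_add: "diagonal_mat a \<Longrightarrow> diagonal_mat b \<Longrightarrow> diagonal_mat (a + b)"
  unfolding diagonal_mat_def by simp

lemma mult_diag_entry:
  assumes "diagonal_mat a" "diagonal_mat b"
  shows "(a ** b) $ i $ j = (if i = j then a$i$i * b$i$i else 0)"
proof -
  have "(a ** b) $ i $ j = (\<Sum>k\<in>UNIV. a$i$k * b$k$j)" by (simp add: matrix_matrix_mult_def)
  also have "\<dots> = (\<Sum>k\<in>UNIV. if k = i then a$i$i * b$i$j else 0)"
    by (rule sum.cong) (use assms in \<open>auto simp: diagonal_mat_def\<close>)
  also have "\<dots> = a$i$i * b$i$j" by simp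
  finally show ?thesis using assms by (auto simp: diagonal_mat_def)
qed

lemma diag_mult: "diagonal_mat a \<Longrightarrow> diagonal_mat b \<Longrightarrow> diagonal_mat (a ** b)"
  by (subst diagonal_mat_def) (simp add: mult_diag_entry)

lemma dg_add: "dg (a + b) = (\<lambda>j. dg a j + dg b j)" unfolding dg_def by simp
lemma dg_mult: "diagonal_mat a \<Longrightarrow> diagonal_mat b \<Longrightarrow> dg (a ** b) = (\<lambda>j. dg a j * dg b j)"
  unfolding dg_def by (simp add: mult_diag_entry fun_eq_iff)

lemma matrix_SS:
  fixes A :: "(real^'n^'n) set"
  assumes "\<forall>M\<in>A. diagonal_mat M"
  shows "card (dg ` A) = card A" and "SS (dg ` A) = real (card (mat_sumset A)) + real (card (mat_prodset A))"
proof -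
  have injA: "inj_on dg A" by (rule inj_onI, rule diag_eq) (use assms in auto)
  then show "card (dg ` A) = card A" by (rule card_image)
  have Ds: "\<forall>M\<in>mat_sumset A. diagonal_mat M" using assms diag_add unfolding mat_sumset_def by auto
  have Dp: "\<forall>M\<in>mat_prodset A. diagonal_mat M" using assms diag_mult unfolding mat_prodset_def by auto
  have fs: "fsum (dg ` A) = dg ` mat_sumset A"
  proof (intro equalityI subsetI)
    fix z assume "z \<in> fsum (dg ` A)"
    then obtain a b where ab: "a \<in> A" "b \<in> A" "z = (\<lambda>j. dg a j + dg b j)" unfolding fsum_def by auto
    have "a + b \<in> mat_sumset A" unfolding mat_sumset_def using ab by blast
    moreover have "z = dg (a + b)" using ab(3) dg_add[of a b] by simp
    ultimately show "z \<in> dg ` mat_sumset A" by blast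
  next
    fix z assume "z \<in> dg ` mat_sumset A"
    then obtain a b where ab: "a \<in> A" "b \<in> A" "z = dg (a + b)" unfolding mat_sumset_def by auto
    then have "z = (\<lambda>j. dg a j + dg b j)" using dg_add by simp
    then show "z \<in> fsum (dg ` A)" using fsum_mem[of "dg a" "dg ` A" "dg b"] ab by auto
  qed
  have cs: "card (dg ` mat_sumset A) = card (mat_sumset A)"
    by (rule card_image, rule inj_onI, rule diag_eq) (use Ds in auto)
  have fp: "fprod (dg ` A) = dg ` mat_prodset A"
  proof (intro equalityI subsetI)
    fix z assume "z \<in> fprod (dg ` A)"
    then obtain a b where ab: "a \<in> A" "b \<in> A" "z = (\<lambda>j. dg a j * dg b j)" unfolding fprod_def by auto
    have "a ** b \<in> mat_prodset A" unfolding mat_prodset_def using ab by blast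
    moreover have "z = dg (a ** b)" using ab(3) dg_mult[of a b] assms ab(1,2) by simp
    ultimately show "z \<in> dg ` mat_prodset A" by blast
  next
    fix z assume "z \<in> dg ` mat_prodset A"
    then obtain a b where ab: "a \<in> A" "b \<in> A" "z = dg (a ** b)" unfolding mat_prodset_def by auto
    then have "z = (\<lambda>j. dg a j * dg b j)" using dg_mult[of a b] assms ab(1,2) by simp
    then show "z \<in> fprod (dg ` A)" using fprod_mem[of "dg a" "dg ` A" "dg b"] ab by auto
  qed
  have cp: "card (dg ` mat_prodset A) = card (mat_prodset A)"
    by (rule card_image, rule inj_onI, rule diag_eq) (use Dp in auto)
  show "SS (dg ` A) = real (card (mat_sumset A)) + real (card (mat_prodset A))"
    unfolding SS_def fs fp cs cp ..
qed




theorem theorem1p2: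
  fixes \<delta>1 :: real
  assumes "\<delta>1 > 0"
    and "sp_admissible \<delta>1"
  shows "\<exists>C>0. \<exists>D::real. \<forall>A :: (real^'n::finite^'n) set.
           finite A \<and> A \<noteq> {} \<and> (\<forall>M\<in>A. diagonal_mat M) \<longrightarrow>
             real (card (mat_sumset A)) + real (card (mat_prodset A))
               \<ge> C * real (card A) powr (1 + \<delta>1 / real CARD('n))
                   * ln (real (card A)) powr D"
proof -
  obtain c1 E1 where c1: "c1 > 0" "E1 \<ge> 0" and H1: "\<forall>B::real set. finite B \<and> B \<noteq> {} \<longrightarrow>
     c1 * real (card B) powr (1+\<delta>1) / Lg (card B) powr E1 \<le> real (card (real_sumset B)) + real (card (real_prodset B))"
    using oneD[OF assms(2)] by blast
  have H1': "\<And>B::real set. finite B \<Longrightarrow> B \<noteq> {} \<Longrightarrow> c1 * real (card B) powr (1+\<delta>1) / Lg (card B) powr E1 \<le> real (card (real_sumset B)) + real (card (real_prodset B))"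
    using H1 by blast
  obtain c E where cp: "c > 0" "E \<ge> 0" and MI: "\<forall>(I::'n set) (A::('n\<Rightarrow>real) set). finite I \<and> card I = CARD('n) \<and> finite A \<and> A \<noteq> {} \<and> (\<forall>a\<in>A. \<forall>j. j\<notin>I \<longrightarrow> a j = 0) \<longrightarrow>
     c * real (card A) powr (1 + \<delta>1/real(max CARD('n) 1)) / Lg (card A) powr E \<le> SS A"
    using main_ind[OF assms(1) c1 H1', of "CARD('n)"] by blast
  have cardn: "CARD('n) \<ge> 1" using finite_UNIV_card_ge_0[where 'a='n] by simp
  then have mx: "real (max CARD('n) 1) = real CARD('n)" by simp
  define e where "e = 1 + \<delta>1 / real CARD('n)"
  define K where "K = 1 + 1 / ln (2::real)"
  have K1: "K \<ge> 1" unfolding K_def by simp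
  have KE: "K powr E > 0" using K1 by simp
  have main: "\<forall>A :: (real^'n^'n) set. finite A \<and> A \<noteq> {} \<and> (\<forall>M\<in>A. diagonal_mat M) \<longrightarrow>
             real (card (mat_sumset A)) + real (card (mat_prodset A))
               \<ge> (c / K powr E) * real (card A) powr e * ln (real (card A)) powr (-E)"
  proof (intro allI impI)
    fix A :: "(real^'n^'n) set"
    assume H: "finite A \<and> A \<noteq> {} \<and> (\<forall>M\<in>A. diagonal_mat M)"
    define N where "N = card A"
    have N1: "N \<ge> 1" unfolding N_def using H by (simp add: Suc_le_eq card_gt_0_iff)
    have "c * real (card (dg ` A)) powr (1 + \<delta>1/real(max CARD('n) 1)) / Lg (card (dg ` A)) powr E \<le> SS (dg ` A)"
      using MI[rule_format, of UNIV "dg ` A"] H by simp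
    then have B: "c * real N powr e / Lg N powr E \<le> real (card (mat_sumset A)) + real (card (mat_prodset A))"
      unfolding matrix_SS[of A, OF conjunct2[OF conjunct2[OF H]]] mx e_def N_def .
    show "real (card (mat_sumset A)) + real (card (mat_prodset A))
               \<ge> (c / K powr E) * real (card A) powr e * ln (real (card A)) powr (-E)"
    proof (cases "N = 1")
      case True
      then show ?thesis unfolding N_def by simp
    next
      case False
      then have N2: "N \<ge> 2" using N1 by simp
      have lnp: "ln (real N) \<ge> ln 2" using N2 by simp
      have ln2: "ln (2::real) > 0" by simp
      have lp: "ln (real N) > 0" using lnp ln2 by linarith
      have "Lg N \<le> K * ln (real N)"
      proof -
        have "1 \<le> ln (real N) / ln 2" using lnp ln2 by simp
        then show ?thesis unfolding Lg_def K_def by (simp add: distrib_right)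
      qed
      then have "Lg N powr E \<le> (K * ln (real N)) powr E"
        using cp Lg_ge1[of N] N1 by (intro powr_mono2) auto
      also have "\<dots> = K powr E * ln (real N) powr E" using K1 lp by (simp add: powr_mult)
      finally have LE: "Lg N powr E \<le> K powr E * ln (real N) powr E" .
      have LgP: "Lg N powr E > 0" using Lg_ge1[of N] N1 by simp
      have "(c / K powr E) * real N powr e * ln (real N) powr (-E) = c * real N powr e / (K powr E * ln (real N) powr E)"
        using lp by (simp add: powr_minus_divide)
      also have "\<dots> \<le> c * real N powr e / Lg N powr E"
      proof -
        have "K powr E * ln (real N) powr E > 0" using K1 lp by simp
        then have pp: "0 < (K powr E * ln (real N) powr E) * Lg N powr E" using LgP by (rule mult_pos_pos)
        have c0: "0 \<le> c * real N powr e" using cp by simp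
        show ?thesis by (rule divide_left_mono[OF LE c0 pp])
      qed
      also have "\<dots> \<le> real (card (mat_sumset A)) + real (card (mat_prodset A))" by (rule B)
      finally show ?thesis unfolding N_def .
    qed
  qed
  have "c / K powr E > 0" using cp KE by simp
  then show ?thesis using main unfolding e_def by blast
qed


end
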